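(* Let $G$ be a locally soluble group in which every non-abelian subgroup $H$ satisfies $C_G(H)\le H$. If $G$ has a non-abelian finite subgroup contained in $R(G)$, then $G$ is locally finite.
   Context: An element $g\in G$ is a right Engel element if for every $x\in G$ there is a positive integer $n$ with $[g,{}_n x]=1$, where $[g,{}_1x]=[g,x]$ and $[g,{}_{k+1}x]=[[g,{}_kx],x]$. $R(G)$ denotes the set of all right Engel elements of $G$. $C_G(H)$ denotes the centralizer of $H$ in $G$. *)

theory Defs
  imports "HOL-Algebra.Algebra"
begin

definition commutator :: "('a, 'b) monoid_scheme \<Rightarrow> 'a \<Rightarrow> 'a \<Rightarrow> 'a" where
  "commutator G g x = inv\<^bsub>G\<^esub> g \<otimes>\<^bsub>G\<^esub> inv\<^bsub>G\<^esub> x \<otimes>\<^bsub>G\<^esub> g \<otimes>\<^bsub>G\<^esub> x"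

text \<open>Iterated commutator: engel_comm G g x n = [g, n x]; [g, 0 x] = g.\<close>
primrec engel_comm :: "('a, 'b) monoid_scheme \<Rightarrow> 'a \<Rightarrow> 'a \<Rightarrow> nat \<Rightarrow> 'a" where
  "engel_comm G g x 0 = g"
| "engel_comm G g x (Suc n) = commutator G (engel_comm G g x n) x"

definition right_engel_elements :: "('a, 'b) monoid_scheme \<Rightarrow> 'a set" where
  "right_engel_elements G = {g \<in> carrier G. \<forall>x \<in> carrier G. \<exists>n > 0. engel_comm G g x n = \<one>\<^bsub>G\<^esub>}"

definition centralizer :: "('a, 'b) monoid_scheme \<Rightarrow> 'a set \<Rightarrow> 'a set" where
  "centralizer G H = {g \<in> carrier G. \<forall>h \<in> H. g \<otimes>\<^bsub>G\<^esub> h = h \<otimes>\<^bsub>G\<^esub> g}"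

definition abelian_set :: "('a, 'b) monoid_scheme \<Rightarrow> 'a set \<Rightarrow> bool" where
  "abelian_set G H \<longleftrightarrow> (\<forall>x \<in> H. \<forall>y \<in> H. x \<otimes>\<^bsub>G\<^esub> y = y \<otimes>\<^bsub>G\<^esub> x)"

definition locally_soluble :: "('a, 'b) monoid_scheme \<Rightarrow> bool" where
  "locally_soluble G \<longleftrightarrow>
     (\<forall>S. finite S \<and> S \<subseteq> carrier G \<longrightarrow> solvable (subgroup_generated G S))"

definition locally_finite :: "('a, 'b) monoid_scheme \<Rightarrow> bool" where
  "locally_finite G \<longleftrightarrow>
     (\<forall>S. finite S \<and> S \<subseteq> carrier G \<longrightarrow> finite (carrier (subgroup_generated G S)))"

end

theory Submission
  imports Defs
begin

context group begin

lemma inv_cancel_l [simp]: "x \<in> carrier G \<Longrightarrow> y \<in> carrier G \<Longrightarrow> inv x \<otimes> (x \<otimes> y) = y"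
  by (simp add: m_assoc[symmetric])
lemma inv_cancel_l2 [simp]: "x \<in> carrier G \<Longrightarrow> y \<in> carrier G \<Longrightarrow> x \<otimes> (inv x \<otimes> y) = y"
  by (simp add: m_assoc[symmetric])

definition per :: "'a \<Rightarrow> bool" where
  "per x \<longleftrightarrow> (\<exists>n>0. x [^] (n::nat) = \<one>)"

definition lf :: "'a set \<Rightarrow> bool" where
  "lf XX \<longleftrightarrow> (\<forall>S. finite S \<and> S \<subseteq> XX \<longrightarrow> finite (generate G S))"

lemma subgroup_pow_closed:
  assumes "subgroup F G" "x \<in> F" shows "x [^] (n::nat) \<in> F"
proof (induction n)
  case 0 then show ?case using subgroup.one_closed[OF assms(1)] by simp
next
  case (Suc n)
  have "x [^] Suc n = x [^] n \<otimes> x" by simp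
  then show ?case using Suc subgroup.m_closed[OF assms(1)] assms(2) by simp
qed

lemma per_finite_subgroup:
  assumes "subgroup F G" "finite F" "x \<in> F" shows "per x"
proof -
  have xc: "x \<in> carrier G" using subgroup.mem_carrier[OF assms(1,3)] .
  have "range (\<lambda>n::nat. x [^] n) \<subseteq> F"
    using subgroup_pow_closed[OF assms(1,3)] by blast
  hence fin: "finite (range (\<lambda>n::nat. x [^] n))" using assms(2) finite_subset by blast
  have "\<not> inj (\<lambda>n::nat. x [^] n)"
  proof
    assume "inj (\<lambda>n::nat. x [^] n)"
    then have "finite (UNIV :: nat set)" by (rule finite_imageD[OF fin])
    then show False by simp
  qed
  then obtain i j :: nat where ij: "i \<noteq> j" "x [^] i = x [^] j" unfolding inj_def by blast
  have "\<exists>i j::nat. i < j \<and> x [^] i = x [^] j"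
  proof (cases "i < j")
    case True thus ?thesis using ij by blast
  next
    case False hence "j < i" using ij(1) by simp
    thus ?thesis using ij(2) by (intro exI[of _ j] exI[of _ i]) simp
  qed
  then obtain i j :: nat where ij: "i < j" "x [^] i = x [^] j" by blast
  have "x [^] i \<otimes> x [^] (j - i) = x [^] j"
    using ij(1) xc by (simp add: nat_pow_mult)
  hence "x [^] i \<otimes> x [^] (j - i) = x [^] i" using ij(2) by simp
  hence "x [^] (j - i) = \<one>" using xc by simp
  thus ?thesis unfolding per_def using ij(1) by (intro exI[of _ "j-i"]) auto
qed

lemma per_from_pow:
  assumes "x \<in> carrier G" "m > 0" "per (x [^] (m::nat))" shows "per x"
proof -
  obtain n where n: "n > 0" "(x [^] m) [^] (n::nat) = \<one>" using assms(3) unfolding per_def by blast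
  hence "x [^] (m * n) = \<one>" using assms(1) by (simp add: nat_pow_pow)
  thus ?thesis unfolding per_def using n(1) assms(2) by (intro exI[of _ "m*n"]) auto
qed

lemma conj_gen:
  assumes g: "g \<in> carrier G" and Y: "Y \<subseteq> carrier G" and Z: "subgroup Z G"
    and hyp: "\<And>y. y \<in> Y \<Longrightarrow> g \<otimes> y \<otimes> inv g \<in> Z"
    and w: "w \<in> generate G Y"
  shows "g \<otimes> w \<otimes> inv g \<in> Z"
  using w
proof (induction rule: generate.induct)
  case one
  then show ?case using g subgroup.one_closed[OF Z] by simp
next
  case (incl h)
  then show ?case using hyp by blast
next
  case (inv h)
  have hc: "h \<in> carrier G" using inv Y by blast
  have "g \<otimes> inv h \<otimes> inv g = inv (g \<otimes> h \<otimes> inv g)"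
    using g hc by (simp add: inv_mult_group m_assoc)
  then show ?case using hyp[OF inv] subgroup.m_inv_closed[OF Z] by simp
next
  case (eng h1 h2)
  have c: "h1 \<in> carrier G" "h2 \<in> carrier G" using eng(1,2) generate_in_carrier Y by blast+
  have eq: "g \<otimes> (h1 \<otimes> h2) \<otimes> inv g = (g \<otimes> h1 \<otimes> inv g) \<otimes> (g \<otimes> h2 \<otimes> inv g)"
    using c g by (simp add: m_assoc)
  show ?case by (subst eq) (rule subgroup.m_closed[OF Z eng(3) eng(4)])
qed

end

context group begin

lemma ext_lf:
  assumes N: "subgroup N G" "lf N" and T: "finite T" "T \<subseteq> carrier G" "\<one> \<in> T"
    and S: "finite S" "S \<subseteq> carrier G"
    and cl: "\<forall>t\<in>T. \<forall>s\<in>S. (\<exists>n\<in>N. \<exists>t'\<in>T. t \<otimes> s = n \<otimes> t') \<and> (\<exists>n\<in>N. \<exists>t'\<in>T. t \<otimes> inv s = n \<otimes> t')"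
  shows "finite (generate G S)"
proof -
  have "\<forall>ts. \<exists>q. ts \<in> T \<times> S \<longrightarrow> fst q \<in> N \<and> snd q \<in> T \<and> fst ts \<otimes> snd ts = fst q \<otimes> snd q"
    using cl by fastforce
  from choice[OF this] obtain p where
    p: "\<forall>ts. ts \<in> T \<times> S \<longrightarrow> fst (p ts) \<in> N \<and> snd (p ts) \<in> T \<and> fst ts \<otimes> snd ts = fst (p ts) \<otimes> snd (p ts)"
    by blast
  have "\<forall>ts. \<exists>q. ts \<in> T \<times> S \<longrightarrow> fst q \<in> N \<and> snd q \<in> T \<and> fst ts \<otimes> inv (snd ts) = fst q \<otimes> snd q"
    using cl by fastforce
  from choice[OF this] obtain p' where
    p': "\<forall>ts. ts \<in> T \<times> S \<longrightarrow> fst (p' ts) \<in> N \<and> snd (p' ts) \<in> T \<and> fst ts \<otimes> inv (snd ts) = fst (p' ts) \<otimes> snd (p' ts)"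
    by blast
  define Y where "Y = (\<lambda>ts. fst (p ts)) ` (T \<times> S) \<union> (\<lambda>ts. fst (p' ts)) ` (T \<times> S)"
  have Yfin: "finite Y" unfolding Y_def using T(1) S(1) by simp
  have YN: "Y \<subseteq> N" unfolding Y_def using p p' by blast
  have NC: "N \<subseteq> carrier G" using subgroup.subset[OF N(1)] .
  define L where "L = generate G Y"
  have Lfin: "finite L" unfolding L_def using N(2) Yfin YN unfolding lf_def by blast
  have Lsub: "subgroup L G" unfolding L_def using generate_is_subgroup YN NC by blast
  have YL: "Y \<subseteq> L" unfolding L_def using generate.incl[of _ Y G] by blast
  have LC: "L \<subseteq> carrier G" using subgroup.subset[OF Lsub] .
  have TC: "T \<subseteq> carrier G" using T(2) .
  have main: "\<forall>l\<in>L. \<forall>t\<in>T. \<exists>l'\<in>L. \<exists>t'\<in>T. l \<otimes> t \<otimes> h = l' \<otimes> t'" if h: "h \<in> generate G S" for h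
    using h
  proof (induction rule: generate.induct)
    case one
    show ?case
    proof (intro ballI)
      fix l t assume lt: "l \<in> L" "t \<in> T"
      have "l \<in> carrier G" "t \<in> carrier G" using lt LC TC by (auto simp: subset_iff)
      hence "l \<otimes> t \<otimes> \<one> = l \<otimes> t" by simp
      thus "\<exists>l'\<in>L. \<exists>t'\<in>T. l \<otimes> t \<otimes> \<one> = l' \<otimes> t'" using lt by blast
    qed
  next
    case (incl s)
    show ?case
    proof (intro ballI)
      fix l t assume lt: "l \<in> L" "t \<in> T"
      have ts: "(t, s) \<in> T \<times> S" using lt incl by blast
      let ?n = "fst (p (t, s))" and ?t' = "snd (p (t, s))"
      have pp: "?n \<in> N" "?t' \<in> T" "t \<otimes> s = ?n \<otimes> ?t'" using p ts by auto
      have nL: "?n \<in> L" using YL ts unfolding Y_def by blast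
      have c: "l \<in> carrier G" "t \<in> carrier G" "s \<in> carrier G" "?n \<in> carrier G" "?t' \<in> carrier G"
        using lt LC TC incl S(2) nL pp(2) by (auto simp: subset_iff)
      have "l \<otimes> t \<otimes> s = (l \<otimes> ?n) \<otimes> ?t'" using c pp(3) by (simp add: m_assoc)
      moreover have "l \<otimes> ?n \<in> L" using subgroup.m_closed[OF Lsub lt(1) nL] .
      ultimately show "\<exists>l'\<in>L. \<exists>t'\<in>T. l \<otimes> t \<otimes> s = l' \<otimes> t'" using pp(2) by blast
    qed
  next
    case (inv s)
    show ?case
    proof (intro ballI)
      fix l t assume lt: "l \<in> L" "t \<in> T"
      have ts: "(t, s) \<in> T \<times> S" using lt inv by blast
      let ?n = "fst (p' (t, s))" and ?t' = "snd (p' (t, s))"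
      have pp: "?n \<in> N" "?t' \<in> T" "t \<otimes> inv s = ?n \<otimes> ?t'" using p' ts by auto
      have nL: "?n \<in> L" using YL ts unfolding Y_def by blast
      have c: "l \<in> carrier G" "t \<in> carrier G" "s \<in> carrier G" "?n \<in> carrier G" "?t' \<in> carrier G"
        using lt LC TC inv S(2) nL pp(2) by (auto simp: subset_iff)
      have "l \<otimes> t \<otimes> inv s = (l \<otimes> ?n) \<otimes> ?t'" using c pp(3) by (simp add: m_assoc)
      moreover have "l \<otimes> ?n \<in> L" using subgroup.m_closed[OF Lsub lt(1) nL] .
      ultimately show "\<exists>l'\<in>L. \<exists>t'\<in>T. l \<otimes> t \<otimes> inv s = l' \<otimes> t'" using pp(2) by blast
    qed
  next
    case (eng h1 h2)
    show ?case
    proof (intro ballI)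
      fix l t assume lt: "l \<in> L" "t \<in> T"
      obtain l1 t1 where l1: "l1 \<in> L" "t1 \<in> T" "l \<otimes> t \<otimes> h1 = l1 \<otimes> t1" using eng.IH(1) lt by blast
      obtain l2 t2 where l2: "l2 \<in> L" "t2 \<in> T" "l1 \<otimes> t1 \<otimes> h2 = l2 \<otimes> t2" using eng.IH(2) l1(1,2) by blast
      have c: "l \<in> carrier G" "t \<in> carrier G" "h1 \<in> carrier G" "h2 \<in> carrier G"
        using lt LC TC eng.hyps generate_in_carrier[OF S(2)] by (auto simp: subset_iff)
      have "l \<otimes> t \<otimes> (h1 \<otimes> h2) = (l \<otimes> t \<otimes> h1) \<otimes> h2" using c by (simp add: m_assoc)
      also have "\<dots> = l2 \<otimes> t2" using l1(3) l2(3) by simp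
      finally show "\<exists>l'\<in>L. \<exists>t'\<in>T. l \<otimes> t \<otimes> (h1 \<otimes> h2) = l' \<otimes> t'" using l2(1,2) by blast
    qed
  qed
  have "generate G S \<subseteq> (\<lambda>lt. fst lt \<otimes> snd lt) ` (L \<times> T)"
  proof
    fix h assume h: "h \<in> generate G S"
    have hc: "h \<in> carrier G" using generate_in_carrier[OF S(2) h] .
    have oL: "\<one> \<in> L" using subgroup.one_closed[OF Lsub] .
    obtain l' t' where lt: "l' \<in> L" "t' \<in> T" "\<one> \<otimes> \<one> \<otimes> h = l' \<otimes> t'" using main[OF h] oL T(3) by blast
    have "h = fst (l', t') \<otimes> snd (l', t')" using lt(3) hc by simp
    thus "h \<in> (\<lambda>lt. fst lt \<otimes> snd lt) ` (L \<times> T)" using lt(1,2) by blast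
  qed
  moreover have "finite ((\<lambda>lt. fst lt \<otimes> snd lt) ` (L \<times> T))" using Lfin T(1) by simp
  ultimately show ?thesis using finite_subset by blast
qed

end

context group begin

lemma absorb:
  assumes N: "subgroup N G" and nrm: "\<And>h n. h \<in> H \<Longrightarrow> n \<in> N \<Longrightarrow> h \<otimes> n \<otimes> inv h \<in> N"
    and HC: "H \<subseteq> carrier G"
    and "n0 \<in> N" "w \<in> H" "k \<in> N"
  shows "\<exists>n\<in>N. n0 \<otimes> w \<otimes> k = n \<otimes> w"
proof -
  have c: "n0 \<in> carrier G" "w \<in> carrier G" "k \<in> carrier G"
    using assms(4-6) subgroup.subset[OF N] HC by auto
  have "n0 \<otimes> (w \<otimes> k \<otimes> inv w) \<in> N"
    using subgroup.m_closed[OF N assms(4) nrm[OF assms(5,6)]] .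
  moreover have "n0 \<otimes> w \<otimes> k = (n0 \<otimes> (w \<otimes> k \<otimes> inv w)) \<otimes> w"
    using c by (simp add: m_assoc)
  ultimately show ?thesis by blast
qed

lemma ab_transversal:
  assumes H: "subgroup H G" and N: "subgroup N G"
    and nrm: "\<And>h n. h \<in> H \<Longrightarrow> n \<in> N \<Longrightarrow> h \<otimes> n \<otimes> inv h \<in> N"
    and der: "\<And>h1 h2. h1 \<in> H \<Longrightarrow> h2 \<in> H \<Longrightarrow> h1 \<otimes> h2 \<otimes> inv h1 \<otimes> inv h2 \<in> N"
    and S: "finite S" "S \<subseteq> H" "\<forall>s\<in>S. per s"
  shows "\<exists>T. finite T \<and> T \<subseteq> H \<and> \<one> \<in> T \<and> (\<forall>t\<in>T. \<forall>u\<in>S. (\<exists>n\<in>N. \<exists>t'\<in>T. t \<otimes> u = n \<otimes> t') \<and> (\<exists>n\<in>N. \<exists>t'\<in>T. t \<otimes> inv u = n \<otimes> t'))"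
  using S
proof (induction S rule: finite_induct)
  case empty
  show ?case using subgroup.one_closed[OF H] by (intro exI[of _ "{\<one>}"]) auto
next
  case (insert s S0)
  have HC: "H \<subseteq> carrier G" using subgroup.subset[OF H] .
  have NC: "N \<subseteq> carrier G" using subgroup.subset[OF N] .
  have one_N: "\<one> \<in> N" using subgroup.one_closed[OF N] .
  obtain T0 where T0: "finite T0" "T0 \<subseteq> H" "\<one> \<in> T0"
    "\<forall>t\<in>T0. \<forall>u\<in>S0. (\<exists>n\<in>N. \<exists>t'\<in>T0. t \<otimes> u = n \<otimes> t') \<and> (\<exists>n\<in>N. \<exists>t'\<in>T0. t \<otimes> inv u = n \<otimes> t')"
    using insert.IH insert.prems by auto
  have sH: "s \<in> H" using insert.prems by auto
  have sc: "s \<in> carrier G" using sH HC by auto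
  obtain od where od: "od > 0" "s [^] (od::nat) = \<one>" using insert.prems unfolding per_def by auto
  define T where "T = (\<lambda>te. fst te \<otimes> s [^] snd te) ` (T0 \<times> {..<od})"
  have memT: "t \<otimes> s [^] e \<in> T" if "t \<in> T0" "e < od" for t and e :: nat
    unfolding T_def using that by (intro image_eqI[of _ _ "(t, e)"]) auto
  have TH: "T \<subseteq> H"
  proof
    fix z assume "z \<in> T"
    then obtain t and e :: nat where te: "t \<in> T0" "z = t \<otimes> s [^] e" unfolding T_def by auto
    show "z \<in> H" using te subgroup.m_closed[OF H] subgroup_pow_closed[OF H sH] T0(2) by auto
  qed
  have oneT: "\<one> \<in> T"
  proof -
    have "\<one> \<otimes> s [^] (0::nat) \<in> T" using memT[OF T0(3) od(1)] .
    thus ?thesis by simp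
  qed
  have finT: "finite T" unfolding T_def using T0(1) by simp
  have triv: "\<exists>n\<in>N. \<exists>t'\<in>T. z = n \<otimes> t'" if "z \<in> T" for z
    using that one_N TH HC by (intro bexI[of _ \<one>] bexI[of _ z]) (auto simp: subset_iff)
  have inv_s: "inv s = s [^] (od - 1)"
  proof -
    have "s [^] (od - 1) \<otimes> s = s [^] od" using od(1) sc
      by (metis Suc_diff_1 nat_pow_Suc)
    hence "s [^] (od - 1) \<otimes> s = \<one>" using od(2) by simp
    thus ?thesis using sc by (intro inv_equality) auto
  qed
  have case_s: "(\<exists>n\<in>N. \<exists>t'\<in>T. t \<otimes> s [^] e \<otimes> s = n \<otimes> t') \<and> (\<exists>n\<in>N. \<exists>t'\<in>T. t \<otimes> s [^] e \<otimes> inv s = n \<otimes> t')"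
    if te: "t \<in> T0" "e < od" for t and e :: nat
  proof
    have tc: "t \<in> carrier G" using te T0(2) HC by auto
    show "\<exists>n\<in>N. \<exists>t'\<in>T. t \<otimes> s [^] e \<otimes> s = n \<otimes> t'"
    proof (cases "Suc e < od")
      case True
      have "t \<otimes> s [^] e \<otimes> s = t \<otimes> s [^] (Suc e)" using tc sc by (simp add: m_assoc)
      thus ?thesis using triv[OF memT[OF te(1) True]] by simp
    next
      case False
      hence "Suc e = od" using te(2) by simp
      hence "s [^] e \<otimes> s = \<one>" using od(2) by (metis nat_pow_Suc)
      hence "t \<otimes> s [^] e \<otimes> s = t \<otimes> s [^] (0::nat)" using tc sc by (simp add: m_assoc)
      thus ?thesis using triv[OF memT[OF te(1) od(1)]] by simp
    qed
    show "\<exists>n\<in>N. \<exists>t'\<in>T. t \<otimes> s [^] e \<otimes> inv s = n \<otimes> t'"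
    proof (cases e)
      case 0
      hence "t \<otimes> s [^] e \<otimes> inv s = t \<otimes> s [^] (od - 1)" using tc sc inv_s by simp
      moreover have "od - 1 < od" using od(1) by simp
      ultimately show ?thesis using triv[OF memT[OF te(1)]] by simp
    next
      case (Suc e')
      have "t \<otimes> s [^] e \<otimes> inv s = t \<otimes> (s [^] e' \<otimes> s) \<otimes> inv s" using Suc by simp
      also have "\<dots> = t \<otimes> s [^] e'" using tc sc by (simp add: m_assoc)
      finally show ?thesis using triv[OF memT[OF te(1)]] Suc te(2) by simp
    qed
  qed
  have case_S0: "\<exists>n\<in>N. \<exists>t'\<in>T. t \<otimes> s [^] e \<otimes> v = n \<otimes> t'"
    if te: "t \<in> T0" "e < od" and v: "v \<in> H" and IHv: "\<exists>n\<in>N. \<exists>t'\<in>T0. t \<otimes> v = n \<otimes> t'" for t and e :: nat and v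
  proof -
    obtain n0 t0 where n0: "n0 \<in> N" "t0 \<in> T0" "t \<otimes> v = n0 \<otimes> t0" using IHv by blast
    have tc: "t \<in> carrier G" using te T0(2) HC by auto
    have vc: "v \<in> carrier G" using v HC by auto
    have t0c: "t0 \<in> carrier G" using n0(2) T0(2) HC by auto
    have n0c: "n0 \<in> carrier G" using n0(1) NC by auto
    define y where "y = s [^] e"
    have yH: "y \<in> H" unfolding y_def using subgroup_pow_closed[OF H sH] .
    have yc: "y \<in> carrier G" using yH HC by auto
    define k where "k = inv y \<otimes> inv v \<otimes> y \<otimes> v"
    have kN: "k \<in> N"
    proof -
      have "inv y \<in> H" "inv v \<in> H" using yH v subgroup.m_inv_closed[OF H] by auto
      from der[OF this] show ?thesis unfolding k_def using yc vc by simp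
    qed
    have kc: "k \<in> carrier G" using kN NC by auto
    have "t \<otimes> y \<otimes> v = (t \<otimes> v) \<otimes> y \<otimes> k"
      unfolding k_def using tc yc vc by (simp add: m_assoc)
    also have "\<dots> = n0 \<otimes> (t0 \<otimes> y) \<otimes> k" using n0(3) n0c t0c yc kc by (simp add: m_assoc)
    finally have eq: "t \<otimes> y \<otimes> v = n0 \<otimes> (t0 \<otimes> y) \<otimes> k" .
    have wH: "t0 \<otimes> y \<in> H" using subgroup.m_closed[OF H] n0(2) T0(2) yH by auto
    obtain n where n: "n \<in> N" "n0 \<otimes> (t0 \<otimes> y) \<otimes> k = n \<otimes> (t0 \<otimes> y)"
      using absorb[OF N nrm HC n0(1) wH kN] by blast
    have inT: "t0 \<otimes> y \<in> T" unfolding y_def using memT[OF n0(2) te(2)] .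
    have "t \<otimes> y \<otimes> v = n \<otimes> (t0 \<otimes> y)" using eq n(2) by simp
    hence "t \<otimes> s [^] e \<otimes> v = n \<otimes> (t0 \<otimes> y)" unfolding y_def .
    thus ?thesis using n(1) inT by blast
  qed
  have fourth: "\<forall>z\<in>T. \<forall>u\<in>insert s S0. (\<exists>n\<in>N. \<exists>t'\<in>T. z \<otimes> u = n \<otimes> t') \<and> (\<exists>n\<in>N. \<exists>t'\<in>T. z \<otimes> inv u = n \<otimes> t')"
  proof (intro ballI)
    fix z u assume z: "z \<in> T" and u: "u \<in> insert s S0"
    obtain t and e :: nat where te: "t \<in> T0" "e < od" "z = t \<otimes> s [^] e" using z unfolding T_def by auto
    show "(\<exists>n\<in>N. \<exists>t'\<in>T. z \<otimes> u = n \<otimes> t') \<and> (\<exists>n\<in>N. \<exists>t'\<in>T. z \<otimes> inv u = n \<otimes> t')"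
    proof (cases "u = s")
      case True
      thus ?thesis using case_s[OF te(1,2)] te(3) by simp
    next
      case False
      hence uS0: "u \<in> S0" using u by simp
      have uH: "u \<in> H" using uS0 insert.prems by auto
      have iuH: "inv u \<in> H" using subgroup.m_inv_closed[OF H uH] .
      show ?thesis
        using case_S0[OF te(1,2) uH] case_S0[OF te(1,2) iuH] T0(4) te(1) uS0 te(3) by blast
    qed
  qed
  show ?case using finT TH oneT fourth by blast
qed

end

context group begin

lemma derived_set_mem:
  "h1 \<in> K \<Longrightarrow> h2 \<in> K \<Longrightarrow> h1 \<otimes> h2 \<otimes> inv h1 \<otimes> inv h2 \<in> derived G K"
  unfolding derived_def by (rule generate.incl) blast

lemma conj_derived:
  assumes XC: "XX \<subseteq> carrier G" and g: "g \<in> carrier G"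
    and cl: "\<And>x. x \<in> XX \<Longrightarrow> g \<otimes> x \<otimes> inv g \<in> XX"
    and y: "y \<in> derived G XX"
  shows "g \<otimes> y \<otimes> inv g \<in> derived G XX"
proof -
  have Z: "subgroup (derived G XX) G" using derived_is_subgroup[OF XC] .
  have DS: "derived_set G XX \<subseteq> carrier G" using derived_set_in_carrier[OF XC] .
  show ?thesis
  proof (rule conj_gen[OF g DS Z])
    show "y \<in> generate G (derived_set G XX)" using y unfolding derived_def .
  next
    fix z assume "z \<in> derived_set G XX"
    then obtain h1 h2 where h: "h1 \<in> XX" "h2 \<in> XX" "z = h1 \<otimes> h2 \<otimes> inv h1 \<otimes> inv h2" by blast
    have c: "h1 \<in> carrier G" "h2 \<in> carrier G" using h XC by auto
    have "g \<otimes> z \<otimes> inv g = (g \<otimes> h1 \<otimes> inv g) \<otimes> (g \<otimes> h2 \<otimes> inv g) \<otimes> inv (g \<otimes> h1 \<otimes> inv g) \<otimes> inv (g \<otimes> h2 \<otimes> inv g)"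
      unfolding h(3) using c g by (simp add: m_assoc inv_mult_group)
    thus "g \<otimes> z \<otimes> inv g \<in> derived G XX"
      using derived_set_mem[OF cl[OF h(1)] cl[OF h(2)]] by simp
  qed
qed

lemma lf_soluble:
  "\<And>H. subgroup H G \<Longrightarrow> (\<forall>h\<in>H. per h) \<Longrightarrow> (derived G ^^ n) H = {\<one>} \<Longrightarrow> lf H"
proof (induction n)
  case 0
  then have H1: "H = {\<one>}" by simp
  show ?case unfolding lf_def
  proof (intro allI impI)
    fix S assume S: "finite S \<and> S \<subseteq> H"
    have "generate G S \<subseteq> H" using generate_subgroup_incl[OF _ "0.prems"(1)] S by blast
    thus "finite (generate G S)" using H1 finite_subset by auto
  qed
next
  case (Suc n)
  note H = Suc.prems(1)
  have HC: "H \<subseteq> carrier G" using subgroup.subset[OF H] .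
  define N where "N = derived G H"
  have Nsub: "subgroup N G" unfolding N_def using derived_is_subgroup[OF HC] .
  have NH: "N \<subseteq> H" unfolding N_def using derived_incl[OF subset_refl H] .
  have Nper: "\<forall>h\<in>N. per h" using Suc.prems(2) NH by blast
  have "(derived G ^^ n) N = {\<one>}"
    using Suc.prems(3) unfolding N_def by (simp add: funpow_swap1)
  hence lfN: "lf N" using Suc.IH[OF Nsub Nper] by simp
  have nrm: "h \<otimes> m \<otimes> inv h \<in> N" if "h \<in> H" "m \<in> N" for h m
  proof -
    have hc: "h \<in> carrier G" using that HC by auto
    have "\<And>x. x \<in> H \<Longrightarrow> h \<otimes> x \<otimes> inv h \<in> H"
      using that(1) subgroup.m_closed[OF H] subgroup.m_inv_closed[OF H] by simp
    thus ?thesis using conj_derived[OF HC hc] that(2) unfolding N_def by blast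
  qed
  have der: "h1 \<otimes> h2 \<otimes> inv h1 \<otimes> inv h2 \<in> N" if "h1 \<in> H" "h2 \<in> H" for h1 h2
    unfolding N_def using derived_set_mem[OF that] .
  show ?case unfolding lf_def
  proof (intro allI impI)
    fix S assume S: "finite S \<and> S \<subseteq> H"
    have Sper: "\<forall>s\<in>S. per s" using S Suc.prems(2) by blast
    obtain T where T: "finite T" "T \<subseteq> H" "\<one> \<in> T"
      "\<forall>t\<in>T. \<forall>u\<in>S. (\<exists>n\<in>N. \<exists>t'\<in>T. t \<otimes> u = n \<otimes> t') \<and> (\<exists>n\<in>N. \<exists>t'\<in>T. t \<otimes> inv u = n \<otimes> t')"
      using ab_transversal[OF H Nsub nrm der conjunct1[OF S] conjunct2[OF S] Sper] by blast
    show "finite (generate G S)"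
    proof (rule ext_lf[OF Nsub lfN T(1) _ T(3) conjunct1[OF S] _ T(4)])
      show "T \<subseteq> carrier G" using T(2) HC by blast
      show "S \<subseteq> carrier G" using S HC by blast
    qed
  qed
qed

end


locale qctx = group G for G (structure) +
  fixes A x
  assumes A_sub: "subgroup A G" and x_c: "x \<in> carrier G"
    and xA: "\<And>u. u \<in> A \<Longrightarrow> inv x \<otimes> u \<otimes> x \<in> A"
    and xA': "\<And>u. u \<in> A \<Longrightarrow> x \<otimes> u \<otimes> inv x \<in> A"
begin

abbreviation "K \<equiv> G\<lparr>carrier := A\<rparr>"
definition "B = derived G A"
definition "Q = K Mod B"
definition "prj u = B #> u"
definition "tau u = inv x \<otimes> u \<otimes> x"

lemma AC: "A \<subseteq> carrier G" using subgroup.subset[OF A_sub] .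
lemma A_c: "u \<in> A \<Longrightarrow> u \<in> carrier G" using AC by auto
lemma B_sub: "subgroup B G" unfolding B_def using derived_is_subgroup[OF AC] .
lemma BA: "B \<subseteq> A" unfolding B_def using derived_incl[OF subset_refl A_sub] .

lemma groupK: "group K" using subgroup_imp_group[OF A_sub] .
lemma normalB: "B \<lhd> K" unfolding B_def using derived_subgroup_is_normal[OF A_sub] .

sublocale Q: comm_group Q
  unfolding Q_def B_def by (rule derived_quot_of_subgroup_is_comm_group[OF A_sub])

lemma rc: "r_coset K B u = r_coset G B u" by (simp add: r_coset_def)

lemma prj_hom: "prj \<in> hom K Q"
proof -
  have "(\<lambda>a. B #>\<^bsub>K\<^esub> a) \<in> hom K (K Mod B)" using normal.r_coset_hom_Mod[OF normalB] .
  thus ?thesis unfolding prj_def Q_def rc .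
qed

sublocale pr: group_hom K Q prj
  using groupK Q.is_group prj_hom by (simp add: group_hom_def group_hom_axioms_def)

lemma prj_carr: "u \<in> A \<Longrightarrow> prj u \<in> carrier Q"
  using pr.hom_closed by simp
lemma prj_mult: "u \<in> A \<Longrightarrow> v \<in> A \<Longrightarrow> prj (u \<otimes> v) = prj u \<otimes>\<^bsub>Q\<^esub> prj v"
  using pr.hom_mult by simp
lemma prj_inv: "u \<in> A \<Longrightarrow> prj (inv u) = inv\<^bsub>Q\<^esub> (prj u)"
  using pr.hom_inv[of u] m_inv_consistent[OF A_sub] by simp
lemma prj_pow: "u \<in> A \<Longrightarrow> prj (u [^] (m::nat)) = (prj u) [^]\<^bsub>Q\<^esub> m"
  using pr.hom_nat_pow[of u m] nat_pow_consistent[of u m A] by simp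
lemma prj_one_iff: "u \<in> A \<Longrightarrow> prj u = \<one>\<^bsub>Q\<^esub> \<longleftrightarrow> u \<in> B"
proof -
  assume u: "u \<in> A"
  have one: "\<one>\<^bsub>Q\<^esub> = B" unfolding Q_def by simp
  have sBK: "subgroup B K" using normal.axioms(1)[OF normalB] .
  show ?thesis
  proof
    assume "prj u = \<one>\<^bsub>Q\<^esub>"
    hence "r_coset K B u = B" unfolding prj_def one rc .
    moreover have "u \<in> r_coset K B u" using group.rcos_self[OF groupK _ sBK] u by simp
    ultimately show "u \<in> B" by simp
  next
    assume "u \<in> B"
    hence "r_coset K B u = B" using subgroup.rcos_const[OF sBK groupK] by blast
    thus "prj u = \<one>\<^bsub>Q\<^esub>" unfolding prj_def one rc .
  qed
qed
lemma prj_eqD: "u \<in> A \<Longrightarrow> v \<in> A \<Longrightarrow> prj u = prj v \<Longrightarrow> u \<otimes> inv v \<in> B"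
proof -
  assume uv: "u \<in> A" "v \<in> A" "prj u = prj v"
  have iv: "inv v \<in> A" using subgroup.m_inv_closed[OF A_sub uv(2)] .
  have "prj (u \<otimes> inv v) = prj u \<otimes>\<^bsub>Q\<^esub> inv\<^bsub>Q\<^esub> (prj v)" using prj_mult[OF uv(1) iv] prj_inv[OF uv(2)] by simp
  also have "\<dots> = \<one>\<^bsub>Q\<^esub>" using uv(3) prj_carr[OF uv(2)] by simp
  finally show ?thesis using prj_one_iff subgroup.m_closed[OF A_sub uv(1) iv] by blast
qed
lemma prj_eqI: "u \<in> A \<Longrightarrow> v \<in> A \<Longrightarrow> u \<otimes> inv v \<in> B \<Longrightarrow> prj u = prj v"
proof -
  assume uv: "u \<in> A" "v \<in> A" "u \<otimes> inv v \<in> B"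
  have iv: "inv v \<in> A" using subgroup.m_inv_closed[OF A_sub uv(2)] .
  have cl: "u \<otimes> inv v \<in> A" using subgroup.m_closed[OF A_sub uv(1) iv] .
  have "prj (u \<otimes> inv v) = \<one>\<^bsub>Q\<^esub>" using prj_one_iff[OF cl] uv(3) by simp
  hence e: "prj u \<otimes>\<^bsub>Q\<^esub> inv\<^bsub>Q\<^esub> (prj v) = \<one>\<^bsub>Q\<^esub>"
    using prj_mult[OF uv(1) iv] prj_inv[OF uv(2)] by simp
  have "inv\<^bsub>Q\<^esub> (inv\<^bsub>Q\<^esub> (prj v)) = prj u"
    by (rule Q.inv_equality[OF e Q.inv_closed[OF prj_carr[OF uv(2)]] prj_carr[OF uv(1)]])
  thus ?thesis using prj_carr[OF uv(2)] by simp
qed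

lemma tau_c: "u \<in> carrier G \<Longrightarrow> tau u \<in> carrier G" unfolding tau_def using x_c by simp
lemma tau_A: "u \<in> A \<Longrightarrow> tau u \<in> A" unfolding tau_def using xA .
lemma tau_mult: "u \<in> carrier G \<Longrightarrow> v \<in> carrier G \<Longrightarrow> tau (u \<otimes> v) = tau u \<otimes> tau v"
  unfolding tau_def using x_c by (simp add: m_assoc)
lemma tau_inv: "u \<in> carrier G \<Longrightarrow> tau (inv u) = inv (tau u)"
  unfolding tau_def using x_c by (simp add: m_assoc inv_mult_group)
lemma tau_one: "tau \<one> = \<one>" unfolding tau_def using x_c by simp
lemma tau_pow: "u \<in> carrier G \<Longrightarrow> tau (u [^] (m::nat)) = (tau u) [^] m"
proof (induction m)
  case 0 then show ?case using tau_one by simp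
next
  case (Suc m)
  have "tau (u [^] Suc m) = tau (u [^] m \<otimes> u)" by simp
  also have "\<dots> = tau (u [^] m) \<otimes> tau u" using Suc.prems by (simp add: tau_mult)
  finally show ?case using Suc by simp
qed

lemma tau_B: "u \<in> B \<Longrightarrow> tau u \<in> B"
proof -
  assume u: "u \<in> B"
  have ix: "inv x \<in> carrier G" using x_c by simp
  have "inv x \<otimes> u \<otimes> inv (inv x) \<in> derived G A"
    using conj_derived[OF AC ix _ u[unfolded B_def]] xA x_c by simp
  thus ?thesis unfolding tau_def B_def using x_c by simp
qed
lemma untau_B: "u \<in> carrier G \<Longrightarrow> tau u \<in> B \<Longrightarrow> u \<in> B"
proof -
  assume u: "u \<in> carrier G" "tau u \<in> B"
  have "x \<otimes> tau u \<otimes> inv x \<in> derived G A"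
    using conj_derived[OF AC x_c _ u(2)[unfolded B_def]] xA' by simp
  moreover have "x \<otimes> tau u \<otimes> inv x = u" unfolding tau_def using x_c u(1) by (simp add: m_assoc)
  ultimately show ?thesis unfolding B_def by simp
qed

lemma prj_tau_cong: "u \<in> A \<Longrightarrow> v \<in> A \<Longrightarrow> prj u = prj v \<Longrightarrow> prj (tau u) = prj (tau v)"
proof -
  assume uv: "u \<in> A" "v \<in> A" "prj u = prj v"
  have "u \<otimes> inv v \<in> B" using prj_eqD[OF uv] .
  hence "tau (u \<otimes> inv v) \<in> B" by (rule tau_B)
  hence "tau u \<otimes> inv (tau v) \<in> B" using A_c uv by (simp add: tau_mult tau_inv)
  thus ?thesis using prj_eqI tau_A uv by blast
qed

definition "taun k u = inv (x [^] (k::nat)) \<otimes> u \<otimes> x [^] k"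
lemma taun_0: "u \<in> carrier G \<Longrightarrow> taun 0 u = u" unfolding taun_def by simp
lemma taun_Suc: "u \<in> carrier G \<Longrightarrow> taun (Suc k) u = tau (taun k u)"
  unfolding taun_def tau_def using x_c by (simp add: m_assoc inv_mult_group)
lemma taun_A: "u \<in> A \<Longrightarrow> taun k u \<in> A"
proof (induction k)
  case 0 then show ?case using taun_0 A_c by simp
next
  case (Suc k) then show ?case using taun_Suc A_c tau_A by simp
qed

lemma norm_lemma:
  assumes v: "v \<in> A" and w: "w \<in> A" and xr: "x [^] (r::nat) = \<one>"
    and h1: "prj (tau v) = prj v \<otimes>\<^bsub>Q\<^esub> prj w" and h2: "prj (tau w) = prj w"
  shows "(prj w) [^]\<^bsub>Q\<^esub> r = \<one>\<^bsub>Q\<^esub>"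
proof -
  have pv: "prj v \<in> carrier Q" and pw: "prj w \<in> carrier Q" using prj_carr v w by auto
  have claim: "prj (taun k v) = prj v \<otimes>\<^bsub>Q\<^esub> (prj w) [^]\<^bsub>Q\<^esub> k" for k
  proof (induction k)
    case 0 then show ?case using taun_0 A_c v pv by simp
  next
    case (Suc k)
    have wk: "w [^] k \<in> A" using subgroup_pow_closed[OF A_sub w] .
    have vwk: "v \<otimes> w [^] k \<in> A" using subgroup.m_closed[OF A_sub v wk] .
    have "prj (taun k v) = prj (v \<otimes> w [^] k)" using Suc prj_mult[OF v wk] prj_pow[OF w] by simp
    hence "prj (tau (taun k v)) = prj (tau (v \<otimes> w [^] k))" using prj_tau_cong taun_A v vwk by blast
    also have "\<dots> = prj (tau v \<otimes> (tau w) [^] k)" using A_c v w by (simp add: tau_mult tau_pow)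
    also have "\<dots> = prj (tau v) \<otimes>\<^bsub>Q\<^esub> (prj (tau w)) [^]\<^bsub>Q\<^esub> k"
      using prj_mult prj_pow tau_A v w subgroup_pow_closed[OF A_sub tau_A[OF w]] by simp
    also have "\<dots> = prj v \<otimes>\<^bsub>Q\<^esub> prj w \<otimes>\<^bsub>Q\<^esub> (prj w) [^]\<^bsub>Q\<^esub> k" using h1 h2 by simp
    also have "\<dots> = prj v \<otimes>\<^bsub>Q\<^esub> (prj w) [^]\<^bsub>Q\<^esub> Suc k"
      using pv pw Q.m_comm[OF pw Q.nat_pow_closed[OF pw, of k]] by (simp add: Q.m_assoc)
    finally show ?case using taun_Suc A_c v by simp
  qed
  have "taun r v = v" unfolding taun_def using xr A_c v by simp
  hence "prj v = prj v \<otimes>\<^bsub>Q\<^esub> (prj w) [^]\<^bsub>Q\<^esub> r" using claim[of r] by simp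
  thus ?thesis using pv pw by simp
qed

definition "Dm u = inv u \<otimes> tau u"
definition "dd a k = (Dm ^^ k) a"

lemma Dm_A: "u \<in> A \<Longrightarrow> Dm u \<in> A"
  unfolding Dm_def using subgroup.m_closed[OF A_sub subgroup.m_inv_closed[OF A_sub] tau_A] by blast
lemma dd_A: "a \<in> A \<Longrightarrow> dd a k \<in> A"
  unfolding dd_def by (induction k) (auto simp: Dm_A)
lemma dd_Suc: "dd a (Suc k) = Dm (dd a k)" unfolding dd_def by simp
lemma tau_dd: "a \<in> A \<Longrightarrow> tau (dd a k) = dd a k \<otimes> dd a (Suc k)"
  unfolding dd_Suc Dm_def using A_c[OF dd_A] tau_c by (simp add: m_assoc[symmetric])
lemma prj_tau_dd: "a \<in> A \<Longrightarrow> prj (tau (dd a k)) = prj (dd a k) \<otimes>\<^bsub>Q\<^esub> prj (dd a (Suc k))"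
  using tau_dd prj_mult dd_A by simp

lemma e_A: "a \<in> A \<Longrightarrow> engel_comm G x (a \<otimes> x) (Suc k) \<in> A"
proof (induction k)
  case 0
  have "engel_comm G x (a \<otimes> x) (Suc 0) = tau (tau (inv a) \<otimes> a)"
    unfolding tau_def using x_c A_c[OF 0] by (simp add: commutator_def m_assoc inv_mult_group)
  thus ?case using tau_A subgroup.m_closed[OF A_sub] subgroup.m_inv_closed[OF A_sub] 0 by simp
next
  case (Suc k)
  let ?e = "engel_comm G x (a \<otimes> x) (Suc k)"
  have ec: "?e \<in> carrier G" using A_c Suc by simp
  have "engel_comm G x (a \<otimes> x) (Suc (Suc k)) = inv ?e \<otimes> tau (inv a \<otimes> ?e \<otimes> a)"
    unfolding tau_def using x_c A_c[OF Suc.prems] ec by (simp add: commutator_def m_assoc inv_mult_group)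
  thus ?case using tau_A subgroup.m_closed[OF A_sub] subgroup.m_inv_closed[OF A_sub] Suc by simp
qed

lemma e_prj: "a \<in> A \<Longrightarrow> prj (engel_comm G x (a \<otimes> x) (Suc k)) = prj (tau (inv (dd a (Suc k))))"
proof (induction k)
  case 0
  have "engel_comm G x (a \<otimes> x) (Suc 0) = tau (inv (dd a (Suc 0)))"
    unfolding tau_def dd_def Dm_def using x_c A_c[OF 0] by (simp add: commutator_def m_assoc inv_mult_group)
  thus ?case by simp
next
  case (Suc k)
  note a = Suc.prems
  let ?e = "engel_comm G x (a \<otimes> x) (Suc k)"
  let ?d = "dd a (Suc k)"
  have eA: "?e \<in> A" using e_A[OF a] .
  have dA: "?d \<in> A" using dd_A[OF a] .
  have ec: "?e \<in> carrier G" using A_c eA by simp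
  have iaA: "inv a \<in> A" using subgroup.m_inv_closed[OF A_sub a] .
  have eq1: "engel_comm G x (a \<otimes> x) (Suc (Suc k)) = inv ?e \<otimes> (tau (inv a) \<otimes> tau ?e \<otimes> tau a)"
    unfolding tau_def using x_c A_c[OF a] ec by (simp add: commutator_def m_assoc inv_mult_group)
  have c1: "prj (inv ?e) \<in> carrier Q" "prj (tau (inv a)) \<in> carrier Q" "prj (tau ?e) \<in> carrier Q" "prj (tau a) \<in> carrier Q"
    using prj_carr tau_A eA a iaA subgroup.m_inv_closed[OF A_sub eA] by auto
  have "prj (engel_comm G x (a \<otimes> x) (Suc (Suc k))) = prj (inv ?e) \<otimes>\<^bsub>Q\<^esub> (prj (tau (inv a)) \<otimes>\<^bsub>Q\<^esub> prj (tau ?e) \<otimes>\<^bsub>Q\<^esub> prj (tau a))"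
    unfolding eq1 using prj_mult tau_A eA a iaA subgroup.m_inv_closed[OF A_sub eA] subgroup.m_closed[OF A_sub] by simp
  also have "\<dots> = prj (inv ?e) \<otimes>\<^bsub>Q\<^esub> prj (tau ?e)"
  proof -
    have "prj (tau (inv a)) = inv\<^bsub>Q\<^esub> prj (tau a)" using tau_inv A_c a prj_inv tau_A by simp
    thus ?thesis using c1 by (simp add: Q.m_ac)
  qed
  also have "\<dots> = inv\<^bsub>Q\<^esub> (prj (tau (inv ?d))) \<otimes>\<^bsub>Q\<^esub> prj (tau (tau (inv ?d)))"
  proof -
    have idA: "inv ?d \<in> A" using subgroup.m_inv_closed[OF A_sub dA] .
    have "prj (tau ?e) = prj (tau (tau (inv ?d)))" using prj_tau_cong[OF eA tau_A[OF idA] Suc.IH[OF a]] .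
    thus ?thesis using prj_inv eA Suc.IH[OF a] by simp
  qed
  also have "\<dots> = prj (tau (inv (dd a (Suc (Suc k)))))"
  proof -
    have dc: "?d \<in> carrier G" using A_c dA .
    have td: "tau ?d \<in> A" using tau_A dA .
    have eqd: "inv (dd a (Suc (Suc k))) = inv (tau ?d) \<otimes> ?d"
      unfolding dd_Suc[of a "Suc k"] Dm_def using dc tau_c by (simp add: inv_mult_group)
    have "tau (inv (dd a (Suc (Suc k)))) = tau (inv (tau ?d)) \<otimes> tau ?d"
      unfolding eqd using dc tau_c by (simp add: tau_mult)
    hence "prj (tau (inv (dd a (Suc (Suc k))))) = prj (tau (inv (tau ?d))) \<otimes>\<^bsub>Q\<^esub> prj (tau ?d)"
      using prj_mult tau_A td dA subgroup.m_inv_closed[OF A_sub td] by simp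
    moreover have "inv\<^bsub>Q\<^esub> (prj (tau (inv ?d))) = prj (tau ?d)"
      using tau_inv[OF dc] prj_inv[OF td] prj_carr[OF td] by simp
    moreover have "tau (tau (inv ?d)) = tau (inv (tau ?d))" using tau_inv[OF dc] by simp
    ultimately show ?thesis
      using Q.m_comm prj_carr tau_A td subgroup.m_inv_closed[OF A_sub td] by simp
  qed
  finally show ?case .
qed

lemma engel_alg:
  assumes a: "a \<in> A" and xr: "x [^] (r::nat) = \<one>" "r > 0"
    and eng: "engel_comm G x (a \<otimes> x) n = \<one>" "n > 0"
  shows "\<exists>R>0. \<forall>m. R dvd m \<longrightarrow> commutator G x (a [^] (m::nat)) \<in> B"
proof -
  let ?p = "\<lambda>j. prj (dd a j)"
  have pc: "?p j \<in> carrier Q" for j using prj_carr dd_A a by simp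
  have pn: "?p n = \<one>\<^bsub>Q\<^esub>"
  proof -
    obtain n0 where n0: "n = Suc n0" using eng(2) gr0_implies_Suc by blast
    have dnA: "dd a n \<in> A" using dd_A[OF a] .
    have idA: "inv (dd a n) \<in> A" using subgroup.m_inv_closed[OF A_sub dnA] .
    have "prj (tau (inv (dd a n))) = prj \<one>" using e_prj[OF a, of n0] eng(1) n0 by simp
    also have "\<dots> = \<one>\<^bsub>Q\<^esub>" using prj_one_iff subgroup.one_closed[OF A_sub] subgroup.one_closed[OF B_sub] by simp
    finally have "tau (inv (dd a n)) \<in> B" using prj_one_iff tau_A[OF idA] by simp
    hence "inv (dd a n) \<in> B" using untau_B A_c idA by blast
    hence "dd a n \<in> B" using subgroup.m_inv_closed[OF B_sub] A_c dnA by (metis inv_inv)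
    thus ?thesis using prj_one_iff dnA by simp
  qed
  have claim: "\<forall>j. j + k = n \<longrightarrow> 1 \<le> j \<longrightarrow> (?p j) [^]\<^bsub>Q\<^esub> (r ^ k) = \<one>\<^bsub>Q\<^esub>" for k
  proof (induction k)
    case 0 then show ?case using pn by simp
  next
    case (Suc k)
    show ?case
    proof (intro allI impI)
      fix j assume j: "j + Suc k = n" "1 \<le> j"
      obtain j0 where j0: "j = Suc j0" using j(2) by (metis Suc_le_D One_nat_def)
      have ih: "(?p (Suc j)) [^]\<^bsub>Q\<^esub> (r ^ k) = \<one>\<^bsub>Q\<^esub>" using Suc.IH j by simp
      let ?M = "r ^ k"
      define v where "v = (dd a j0) [^] ?M"
      define w where "w = (dd a j) [^] ?M"
      have vA: "v \<in> A" unfolding v_def using subgroup_pow_closed[OF A_sub dd_A[OF a]] .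
      have wA: "w \<in> A" unfolding w_def using subgroup_pow_closed[OF A_sub dd_A[OF a]] .
      have pv: "prj v = (?p j0) [^]\<^bsub>Q\<^esub> ?M" unfolding v_def using prj_pow dd_A a by simp
      have pw: "prj w = (?p j) [^]\<^bsub>Q\<^esub> ?M" unfolding w_def using prj_pow dd_A a by simp
      have h1: "prj (tau v) = prj v \<otimes>\<^bsub>Q\<^esub> prj w"
      proof -
        have "prj (tau v) = prj (tau (dd a j0)) [^]\<^bsub>Q\<^esub> ?M"
          unfolding v_def using tau_pow A_c dd_A a prj_pow tau_A by simp
        also have "\<dots> = (?p j0 \<otimes>\<^bsub>Q\<^esub> ?p j) [^]\<^bsub>Q\<^esub> ?M" using prj_tau_dd[OF a, of j0] j0 by simp
        also have "\<dots> = prj v \<otimes>\<^bsub>Q\<^esub> prj w" using pv pw Q.pow_mult_distrib Q.m_comm pc by simp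
        finally show ?thesis .
      qed
      have h2: "prj (tau w) = prj w"
      proof -
        have "prj (tau w) = prj (tau (dd a j)) [^]\<^bsub>Q\<^esub> ?M"
          unfolding w_def using tau_pow A_c dd_A a prj_pow tau_A by simp
        also have "\<dots> = (?p j \<otimes>\<^bsub>Q\<^esub> ?p (Suc j)) [^]\<^bsub>Q\<^esub> ?M" using prj_tau_dd[OF a, of j] by simp
        also have "\<dots> = (?p j) [^]\<^bsub>Q\<^esub> ?M \<otimes>\<^bsub>Q\<^esub> (?p (Suc j)) [^]\<^bsub>Q\<^esub> ?M"
          using Q.pow_mult_distrib Q.m_comm pc by simp
        also have "\<dots> = prj w" using ih pw pc by simp
        finally show ?thesis .
      qed
      have "(prj w) [^]\<^bsub>Q\<^esub> r = \<one>\<^bsub>Q\<^esub>" using norm_lemma[OF vA wA xr(1) h1 h2] .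
      thus "(?p j) [^]\<^bsub>Q\<^esub> (r ^ Suc k) = \<one>\<^bsub>Q\<^esub>"
        using pw pc Q.nat_pow_pow by (simp add: mult.commute)
    qed
  qed
  have p1: "(?p 1) [^]\<^bsub>Q\<^esub> (r ^ (n - 1)) = \<one>\<^bsub>Q\<^esub>" using claim[of "n - 1"] eng(2) by simp
  show ?thesis
  proof (intro exI[of _ "r ^ (n - 1)"] conjI allI impI)
    show "r ^ (n - 1) > 0" using xr(2) by simp
  next
    fix m :: nat assume "r ^ (n - 1) dvd m"
    then obtain q where q: "m = r ^ (n - 1) * q" by (auto simp: dvd_def)
    define c where "c = a [^] m"
    have cA: "c \<in> A" unfolding c_def using subgroup_pow_closed[OF A_sub a] .
    have cc: "c \<in> carrier G" using A_c cA .
    have ac: "a \<in> carrier G" using A_c a .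
    have comm_eq: "commutator G x c = tau (inv c) \<otimes> c"
      unfolding tau_def commutator_def using x_c cc by (simp add: m_assoc)
    have tcA: "tau (inv c) \<in> A" using tau_A subgroup.m_inv_closed[OF A_sub cA] .
    have p1m: "(?p 1) [^]\<^bsub>Q\<^esub> m = \<one>\<^bsub>Q\<^esub>" using p1 q pc Q.nat_pow_pow[symmetric] by simp
    have "prj (tau c) = prj (tau a) [^]\<^bsub>Q\<^esub> m"
      unfolding c_def using tau_pow[OF ac] prj_pow tau_A a by simp
    also have "\<dots> = (prj a \<otimes>\<^bsub>Q\<^esub> ?p 1) [^]\<^bsub>Q\<^esub> m"
    proof -
      have "prj (tau (dd a 0)) = prj (dd a 0) \<otimes>\<^bsub>Q\<^esub> ?p 1" using prj_tau_dd[OF a, of 0] by simp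
      thus ?thesis unfolding dd_def by simp
    qed
    also have "\<dots> = prj a [^]\<^bsub>Q\<^esub> m" using Q.pow_mult_distrib Q.m_comm pc prj_carr a p1m by simp
    also have "\<dots> = prj c" unfolding c_def using prj_pow a by simp
    finally have ptc: "prj (tau c) = prj c" .
    have "prj (commutator G x c) = inv\<^bsub>Q\<^esub> (prj (tau c)) \<otimes>\<^bsub>Q\<^esub> prj c"
      unfolding comm_eq using prj_mult[OF tcA cA] tau_inv[OF cc] prj_inv tau_A[OF cA] by simp
    also have "\<dots> = \<one>\<^bsub>Q\<^esub>" using ptc prj_carr cA by simp
    finally have "prj (commutator G x c) = \<one>\<^bsub>Q\<^esub>" .
    moreover have "commutator G x c \<in> A" unfolding comm_eq using subgroup.m_closed[OF A_sub tcA cA] .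
    ultimately show "commutator G x (a [^] m) \<in> B" using prj_one_iff unfolding c_def by blast
  qed
qed

end

context group begin

lemma derived_series_sub: "subgroup H G \<Longrightarrow> (derived G ^^ i) H \<subseteq> H"
proof (induction i)
  case 0 then show ?case by simp
next
  case (Suc i)
  have "(derived G ^^ Suc i) H = derived G ((derived G ^^ i) H)" by simp
  also have "\<dots> \<subseteq> H" using derived_incl[OF Suc.IH[OF Suc.prems] Suc.prems] .
  finally show ?case .
qed

lemma derived_series_normal:
  assumes H: "subgroup H G" and h: "h \<in> H"
  shows "u \<in> (derived G ^^ i) H \<Longrightarrow> h \<otimes> u \<otimes> inv h \<in> (derived G ^^ i) H"
proof (induction i arbitrary: u)
  case 0
  then show ?case using h subgroup.m_closed[OF H] subgroup.m_inv_closed[OF H] by simp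
next
  case (Suc i)
  have hc: "h \<in> carrier G" using h subgroup.subset[OF H] by auto
  have sub: "(derived G ^^ i) H \<subseteq> carrier G" using derived_series_sub[OF H] subgroup.subset[OF H] by blast
  show ?case using conj_derived[OF sub hc Suc.IH] Suc.prems by simp
qed

lemma solv_trans:
  assumes S: "S \<subseteq> carrier G" and sol: "solvable (subgroup_generated G S)"
  shows "\<exists>n. (derived G ^^ n) (generate G S) = {\<one>}"
proof -
  let ?H = "generate G S"
  have H: "subgroup ?H G" using generate_is_subgroup[OF S] .
  have eq: "subgroup_generated G S = G\<lparr>carrier := ?H\<rparr>"
    unfolding subgroup_generated_def using S by (simp add: Int_absorb1)
  have grp: "group (G\<lparr>carrier := ?H\<rparr>)" using subgroup_imp_group[OF H] .
  obtain n where n: "(derived (G\<lparr>carrier := ?H\<rparr>) ^^ n) (carrier (G\<lparr>carrier := ?H\<rparr>)) = {\<one>\<^bsub>G\<lparr>carrier := ?H\<rparr>\<^esub>}"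
    using group.solvable_iff_trivial_derived_seq[OF grp] sol eq by auto
  have "(derived (G\<lparr>carrier := ?H\<rparr>) ^^ k) ?H = (derived G ^^ k) ?H" for k
  proof (induction k)
    case 0 then show ?case by simp
  next
    case (Suc k)
    have "(derived (G\<lparr>carrier := ?H\<rparr>) ^^ Suc k) ?H = derived (G\<lparr>carrier := ?H\<rparr>) ((derived G ^^ k) ?H)"
      using Suc by simp
    also have "\<dots> = derived G ((derived G ^^ k) ?H)"
      using derived_consistent[OF derived_series_sub[OF H] H] .
    finally show ?case by simp
  qed
  thus ?thesis using n by auto
qed

lemma orbit_centralize:
  assumes c: "c \<in> carrier G" and Mf: "finite Mc" and MC: "Mc \<subseteq> carrier G" and FM: "FF \<subseteq> Mc"
    and inv_cl: "\<And>m. m \<in> Mc \<Longrightarrow> inv c \<otimes> m \<otimes> c \<in> Mc"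
  shows "\<exists>e>0. \<forall>y\<in>FF. c [^] (e::nat) \<otimes> y = y \<otimes> c [^] e"
proof -
  have pw: "inv (c [^] j) \<otimes> m \<otimes> c [^] j \<in> Mc" if "m \<in> Mc" for j :: nat and m
  proof (induction j)
    case 0 then show ?case using that MC by auto
  next
    case (Suc j)
    have mc: "m \<in> carrier G" using that MC by auto
    have "inv (c [^] Suc j) \<otimes> m \<otimes> c [^] Suc j = inv c \<otimes> (inv (c [^] j) \<otimes> m \<otimes> c [^] j) \<otimes> c"
      using c mc by (simp add: m_assoc inv_mult_group)
    thus ?case using inv_cl[OF Suc.IH] by simp
  qed
  define f where "f = (\<lambda>j::nat. restrict (\<lambda>y. inv (c [^] j) \<otimes> y \<otimes> c [^] j) FF)"
  have fr: "range f \<subseteq> FF \<rightarrow>\<^sub>E Mc"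
  proof
    fix z assume "z \<in> range f"
    then obtain j where j: "z = f j" by blast
    have "\<forall>y\<in>FF. inv (c [^] j) \<otimes> y \<otimes> c [^] j \<in> Mc" using pw FM by blast
    thus "z \<in> FF \<rightarrow>\<^sub>E Mc" unfolding j f_def restrict_PiE_iff .
  qed
  have "finite (FF \<rightarrow>\<^sub>E Mc)" by (rule finite_PiE[OF finite_subset[OF FM Mf] Mf])
  hence fin: "finite (range f)" using fr finite_subset by blast
  have "\<not> inj f"
  proof
    assume "inj f"
    then have "finite (UNIV :: nat set)" by (rule finite_imageD[OF fin])
    then show False by simp
  qed
  then obtain i j :: nat where ij: "i \<noteq> j" "f i = f j" unfolding inj_def by blast
  have "\<exists>i j::nat. i < j \<and> f i = f j"
  proof (cases "i < j")
    case True thus ?thesis using ij by blast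
  next
    case False hence "j < i" using ij(1) by simp
    thus ?thesis using ij(2) by (intro exI[of _ j] exI[of _ i]) simp
  qed
  then obtain i j :: nat where ij: "i < j" "f i = f j" by blast
  define e where "e = j - i"
  have e0: "e > 0" unfolding e_def using ij(1) by simp
  have cj: "c [^] j = c [^] e \<otimes> c [^] i" unfolding e_def using ij(1) c by (simp add: nat_pow_mult)
  show ?thesis
  proof (intro exI[of _ e] conjI e0 ballI)
    fix y assume y: "y \<in> FF"
    have yc: "y \<in> carrier G" using y FM MC by auto
    have "inv (c [^] i) \<otimes> y \<otimes> c [^] i = inv (c [^] j) \<otimes> y \<otimes> c [^] j"
      using fun_cong[OF ij(2), of y] y unfolding f_def by simp
    also have "\<dots> = inv (c [^] i) \<otimes> (inv (c [^] e) \<otimes> y \<otimes> c [^] e) \<otimes> c [^] i"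
      unfolding cj using c yc by (simp add: m_assoc inv_mult_group)
    finally have "inv (c [^] i) \<otimes> y \<otimes> c [^] i = inv (c [^] i) \<otimes> (inv (c [^] e) \<otimes> y \<otimes> c [^] e) \<otimes> c [^] i" .
    hence eq: "y = inv (c [^] e) \<otimes> y \<otimes> c [^] e" using c yc
      by (metis r_cancel l_cancel inv_closed nat_pow_closed m_closed)
    have "c [^] e \<otimes> y = c [^] e \<otimes> (inv (c [^] e) \<otimes> y \<otimes> c [^] e)" using eq by simp
    also have "\<dots> = y \<otimes> c [^] e" using c yc by (simp add: m_assoc)
    finally show "c [^] e \<otimes> y = y \<otimes> c [^] e" .
  qed
qed

end

context group begin

lemma periodic_step:
  assumes cent: "centralizer G F \<subseteq> F"
    and F: "subgroup F G" "finite F" "F \<subseteq> right_engel_elements G"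
    and H: "subgroup H G" "F \<subseteq> H"
    and A: "subgroup A G" "A \<subseteq> H"
    and Anrm: "\<And>h u. h \<in> H \<Longrightarrow> u \<in> A \<Longrightarrow> h \<otimes> u \<otimes> inv h \<in> A"
    and Bper: "\<forall>b \<in> derived G A. per b"
    and Blf: "lf (derived G A)"
    and a: "a \<in> A"
  shows "per a"
proof -
  define B where "B = derived G A"
  have FC: "F \<subseteq> carrier G" using subgroup.subset[OF F(1)] .
  have HC: "H \<subseteq> carrier G" using subgroup.subset[OF H(1)] .
  have AC: "A \<subseteq> carrier G" using subgroup.subset[OF A(1)] .
  have Bsub: "subgroup B G" unfolding B_def using derived_is_subgroup[OF AC] .
  have BA: "B \<subseteq> A" unfolding B_def using derived_incl[OF subset_refl A(1)] .
  have BC: "B \<subseteq> carrier G" using BA AC by blast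
  have ac: "a \<in> carrier G" using a AC by blast
  have Bnrm: "h \<otimes> b \<otimes> inv h \<in> B" if "h \<in> H" "b \<in> B" for h b
  proof -
    have hc: "h \<in> carrier G" using that(1) HC by blast
    show ?thesis unfolding B_def using conj_derived[OF AC hc Anrm[OF that(1)]] that(2)[unfolded B_def] by blast
  qed
  have Rex: "\<exists>R>0. \<forall>m. R dvd m \<longrightarrow> commutator G x (a [^] (m::nat)) \<in> B" if x: "x \<in> F" for x
  proof -
    have xH: "x \<in> H" using x H(2) by blast
    have xc: "x \<in> carrier G" using x FC by blast
    have ixH: "inv x \<in> H" using subgroup.m_inv_closed[OF H(1) xH] .
    have xA: "inv x \<otimes> u \<otimes> x \<in> A" if u: "u \<in> A" for u using Anrm[OF ixH u] xc by simp
    have xA': "x \<otimes> u \<otimes> inv x \<in> A" if u: "u \<in> A" for u using Anrm[OF xH u] .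
    interpret q: qctx G A x by (rule qctx.intro[OF is_group qctx_axioms.intro[OF A(1) xc xA xA']])
    obtain r where r: "r > 0" "x [^] (r::nat) = \<one>" using per_finite_subgroup[OF F(1,2) x] unfolding per_def by blast
    have axc: "a \<otimes> x \<in> carrier G" using ac xc by simp
    have "x \<in> right_engel_elements G" using x F(3) by blast
    then obtain n where n: "n > 0" "engel_comm G x (a \<otimes> x) n = \<one>"
      unfolding right_engel_elements_def using axc by blast
    show ?thesis using q.engel_alg[OF a r(2) r(1) n(2) n(1)] unfolding q.B_def B_def .
  qed
  hence "\<forall>x\<in>F. \<exists>R. R > 0 \<and> (\<forall>m. R dvd m \<longrightarrow> commutator G x (a [^] (m::nat)) \<in> B)" by blast
  then obtain R where R: "\<forall>x\<in>F. R x > 0 \<and> (\<forall>m. R x dvd m \<longrightarrow> commutator G x (a [^] (m::nat)) \<in> B)"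
    by (metis bchoice)
  define M where "M = (\<Prod>x\<in>F. R x)"
  have M0: "M > 0" unfolding M_def using R by (simp add: prod_pos)
  have RM: "R x dvd M" if "x \<in> F" for x unfolding M_def using dvd_prodI[OF F(2) that] .
  define c where "c = a [^] M"
  have cA: "c \<in> A" unfolding c_def using subgroup_pow_closed[OF A(1) a] .
  have cc: "c \<in> carrier G" using cA AC by blast
  have cB: "commutator G x c \<in> B" if "x \<in> F" for x unfolding c_def using R RM[OF that] that by blast
  have "\<forall>y\<in>F. \<exists>n. n > 0 \<and> engel_comm G y c n = \<one>"
  proof
    fix y assume "y \<in> F"
    hence "y \<in> right_engel_elements G" using F(3) by blast
    thus "\<exists>n. n > 0 \<and> engel_comm G y c n = \<one>" unfolding right_engel_elements_def using cc by blast
  qed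
  then obtain ny where ny: "\<forall>y\<in>F. ny y > 0 \<and> engel_comm G y c (ny y) = \<one>" by (metis bchoice)
  have ecB: "engel_comm G y c (Suc k) \<in> B" if y: "y \<in> F" for y k
  proof (induction k)
    case 0 then show ?case using cB[OF y] by simp
  next
    case (Suc k)
    let ?u = "engel_comm G y c (Suc k)"
    have uA: "?u \<in> A" using Suc BA by blast
    have uc: "?u \<in> carrier G" using uA AC by blast
    have "inv ?u \<in> A" "inv c \<in> A" using subgroup.m_inv_closed[OF A(1)] uA cA by auto
    from derived_set_mem[OF this] have "inv ?u \<otimes> inv c \<otimes> ?u \<otimes> c \<in> B" unfolding B_def using uc cc by simp
    thus ?case by (simp add: commutator_def)
  qed
  have ecB': "engel_comm G y c k \<in> B" if "y \<in> F" "1 \<le> k" for y k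
    using ecB[OF that(1), of "k - 1"] that(2) by simp
  define Y where "Y = F \<union> (\<lambda>yk. engel_comm G (fst yk) c (snd yk)) ` (SIGMA y:F. {1..ny y})"
  have Yfin: "finite Y" unfolding Y_def using F(2) by simp
  have Ycases: "s \<in> F \<or> s \<in> B" if "s \<in> Y" for s
    using that ecB' unfolding Y_def by auto
  have YC: "Y \<subseteq> carrier G" using Ycases FC BC by blast
  have oneF: "\<one> \<in> F" using subgroup.one_closed[OF F(1)] .
  have cl: "\<forall>t\<in>F. \<forall>s\<in>Y. (\<exists>n\<in>B. \<exists>t'\<in>F. t \<otimes> s = n \<otimes> t') \<and> (\<exists>n\<in>B. \<exists>t'\<in>F. t \<otimes> inv s = n \<otimes> t')"
  proof (intro ballI)
    fix t s assume t: "t \<in> F" and s: "s \<in> Y"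
    have tc: "t \<in> carrier G" using t FC by blast
    have sc: "s \<in> carrier G" using s YC by blast
    have oneB: "\<one> \<in> B" using subgroup.one_closed[OF Bsub] .
    show "(\<exists>n\<in>B. \<exists>t'\<in>F. t \<otimes> s = n \<otimes> t') \<and> (\<exists>n\<in>B. \<exists>t'\<in>F. t \<otimes> inv s = n \<otimes> t')"
    proof (cases "s \<in> F")
      case True
      have "t \<otimes> s \<in> F" "t \<otimes> inv s \<in> F" using subgroup.m_closed[OF F(1) t] subgroup.m_inv_closed[OF F(1)] True by auto
      moreover have "t \<otimes> s = \<one> \<otimes> (t \<otimes> s)" "t \<otimes> inv s = \<one> \<otimes> (t \<otimes> inv s)" using tc sc by auto
      ultimately show ?thesis using oneB by blast
    next
      case False
      hence sB: "s \<in> B" using Ycases[OF s] by blast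
      have isB: "inv s \<in> B" using subgroup.m_inv_closed[OF Bsub sB] .
      have tH: "t \<in> H" using t H(2) by blast
      have "t \<otimes> s \<otimes> inv t \<in> B" "t \<otimes> inv s \<otimes> inv t \<in> B" using Bnrm[OF tH sB] Bnrm[OF tH isB] by auto
      moreover have "t \<otimes> s = (t \<otimes> s \<otimes> inv t) \<otimes> t" "t \<otimes> inv s = (t \<otimes> inv s \<otimes> inv t) \<otimes> t"
        using tc sc by (simp_all add: m_assoc)
      ultimately show ?thesis using t by blast
    qed
  qed
  define Mc where "Mc = generate G Y"
  have Mcfin: "finite Mc" unfolding Mc_def
    using ext_lf[OF Bsub Blf[folded B_def] F(2) FC oneF Yfin YC cl] .
  have Mcsub: "subgroup Mc G" unfolding Mc_def using generate_is_subgroup[OF YC] .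
  have McC: "Mc \<subseteq> carrier G" using subgroup.subset[OF Mcsub] .
  have YM: "Y \<subseteq> Mc" unfolding Mc_def using generate.incl[of _ Y G] by blast
  have FM: "F \<subseteq> Mc" using YM unfolding Y_def by blast
  have icc: "inv c \<in> carrier G" using cc by simp
  have hyp: "inv c \<otimes> y \<otimes> inv (inv c) \<in> Mc" if y: "y \<in> Y" for y
  proof -
    have yc: "y \<in> carrier G" using y YC by blast
    have conj_eq: "inv c \<otimes> y \<otimes> inv (inv c) = y \<otimes> commutator G y c"
      using yc cc by (simp add: commutator_def m_assoc)
    show ?thesis
    proof (cases "y \<in> F")
      case True
      have "commutator G y c = engel_comm G y c 1" by simp
      moreover have "engel_comm G y c 1 \<in> Y" unfolding Y_def using True ny
        by (intro UnI2 image_eqI[of _ _ "(y, 1)"]) auto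
      ultimately have "commutator G y c \<in> Mc" using YM by auto
      thus ?thesis unfolding conj_eq using subgroup.m_closed[OF Mcsub] YM y by blast
    next
      case False
      then obtain z k where zk: "z \<in> F" "1 \<le> k" "k \<le> ny z" "y = engel_comm G z c k"
        using y unfolding Y_def by auto
      have ceq: "commutator G y c = engel_comm G z c (Suc k)" using zk(4) by simp
      show ?thesis
      proof (cases "Suc k \<le> ny z")
        case True
        have "engel_comm G z c (Suc k) \<in> Y" unfolding Y_def using True zk
          by (intro UnI2 image_eqI[of _ _ "(z, Suc k)"]) auto
        hence "commutator G y c \<in> Mc" using YM ceq by auto
        thus ?thesis unfolding conj_eq using subgroup.m_closed[OF Mcsub] YM y by blast
      next
        case False
        hence "k = ny z" using zk(3) by simp
        hence "y = \<one>" using zk ny by simp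
        thus ?thesis using cc subgroup.one_closed[OF Mcsub] by simp
      qed
    qed
  qed
  have inv_cl: "inv c \<otimes> m \<otimes> c \<in> Mc" if "m \<in> Mc" for m
    using conj_gen[OF icc YC Mcsub hyp] that cc unfolding Mc_def by simp
  obtain e where e: "e > 0" "\<forall>y\<in>F. c [^] (e::nat) \<otimes> y = y \<otimes> c [^] e"
    using orbit_centralize[OF cc Mcfin McC FM inv_cl] by blast
  have "c [^] e \<in> centralizer G F" unfolding centralizer_def using e(2) cc by simp
  hence "c [^] e \<in> F" using cent by blast
  hence "per (c [^] e)" using per_finite_subgroup[OF F(1,2)] by blast
  hence "per c" using per_from_pow[OF cc e(1)] by blast
  thus "per a" using per_from_pow[OF ac M0] unfolding c_def by blast
qed

end

context group begin

lemma periodic_all: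
  assumes cent: "\<And>H. subgroup H G \<Longrightarrow> \<not> abelian_set G H \<Longrightarrow> centralizer G H \<subseteq> H"
    and F: "subgroup F G" "finite F" "\<not> abelian_set G F" "F \<subseteq> right_engel_elements G"
    and ls: "locally_soluble G" and g: "g \<in> carrier G"
  shows "per g"
proof -
  have centF: "centralizer G F \<subseteq> F" using cent[OF F(1) F(3)] .
  have FC: "F \<subseteq> carrier G" using subgroup.subset[OF F(1)] .
  define S where "S = insert g F"
  have SC: "S \<subseteq> carrier G" unfolding S_def using FC g by blast
  have Sfin: "finite S" unfolding S_def using F(2) by simp
  define H where "H = generate G S"
  have Hsub: "subgroup H G" unfolding H_def using generate_is_subgroup[OF SC] .
  have FH: "F \<subseteq> H" unfolding H_def S_def using generate.incl[of _ "insert g F" G] by blast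
  have gH: "g \<in> H" unfolding H_def S_def using generate.incl[of g "insert g F" G] by blast
  have "solvable (subgroup_generated G S)" using ls Sfin SC unfolding locally_soluble_def by blast
  then obtain d where d: "(derived G ^^ d) H = {\<one>}" using solv_trans[OF SC] unfolding H_def by blast
  have claim: "k \<le> d \<longrightarrow> (\<forall>u \<in> (derived G ^^ (d - k)) H. per u)" for k
  proof (induction k)
    case 0
    have "per \<one>" unfolding per_def by (intro exI[of _ 1]) simp
    thus ?case using d by simp
  next
    case (Suc k)
    show ?case
    proof
      assume kd: "Suc k \<le> d"
      define i where "i = d - Suc k"
      have di: "d - k = Suc i" unfolding i_def using kd by simp
      define A where "A = (derived G ^^ i) H"
      have Asub: "subgroup A G" unfolding A_def using exp_of_derived_is_subgroup[OF Hsub] .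
      have AH: "A \<subseteq> H" unfolding A_def using derived_series_sub[OF Hsub] .
      have Anrm: "h \<otimes> u \<otimes> inv h \<in> A" if "h \<in> H" "u \<in> A" for h u
        unfolding A_def using derived_series_normal[OF Hsub that(1)] that(2)[unfolded A_def] .
      have dA: "derived G A = (derived G ^^ (d - k)) H" unfolding A_def di by simp
      have Bper: "\<forall>b \<in> derived G A. per b" using Suc.IH kd unfolding dA by simp
      have Bsub: "subgroup (derived G A) G" using derived_is_subgroup subgroup.subset[OF Asub] by blast
      have "(derived G ^^ k) (derived G A) = (derived G ^^ (k + Suc i)) H"
        unfolding A_def by (simp add: funpow_add funpow_swap1)
      also have "k + Suc i = d" using di kd by simp
      finally have "(derived G ^^ k) (derived G A) = {\<one>}" using d by simp
      hence Blf: "lf (derived G A)" using lf_soluble[OF Bsub Bper] by blast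
      show "\<forall>u \<in> (derived G ^^ (d - Suc k)) H. per u"
        using periodic_step[OF centF F(1,2,4) Hsub FH Asub AH Anrm Bper Blf] unfolding A_def i_def by blast
    qed
  qed
  show ?thesis using claim[of d] gH by simp
qed

end

theorem proposition5p4:
  fixes G (structure)
  assumes "group G"
    and "locally_soluble G"
    and "\<And>H. subgroup H G \<Longrightarrow> \<not> abelian_set G H \<Longrightarrow> centralizer G H \<subseteq> H"
    and "\<exists>F. subgroup F G \<and> finite F \<and> \<not> abelian_set G F \<and> F \<subseteq> right_engel_elements G"
  shows "locally_finite G"
proof -
  interpret group G by (rule assms(1))
  obtain F where F: "subgroup F G" "finite F" "\<not> abelian_set G F" "F \<subseteq> right_engel_elements G"
    using assms(4) by blast
  show ?thesis unfolding locally_finite_def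
  proof (intro allI impI)
    fix S assume S: "finite S \<and> S \<subseteq> carrier G"
    have SC: "S \<subseteq> carrier G" using S by blast
    have car: "carrier (subgroup_generated G S) = generate G S"
      unfolding carrier_subgroup_generated using SC by (simp add: Int_absorb1)
    define H where "H = generate G S"
    have Hsub: "subgroup H G" unfolding H_def using generate_is_subgroup[OF SC] .
    have "solvable (subgroup_generated G S)" using assms(2) S unfolding locally_soluble_def by blast
    then obtain d where d: "(derived G ^^ d) H = {\<one>}" using solv_trans[OF SC] unfolding H_def by blast
    have per: "\<forall>h\<in>H. per h"
      using periodic_all[OF assms(3) F assms(2)] subgroup.subset[OF Hsub] by blast
    have "lf H" using lf_soluble[OF Hsub per d] .
    moreover have "S \<subseteq> H" unfolding H_def using generate.incl[of _ S G] by blast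
    ultimately have "finite (generate G S)" using S unfolding lf_def by blast
    thus "finite (carrier (subgroup_generated G S))" using car by simp
  qed
qed


end
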